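(* Let $\mathbb F$ be a field, $n\ge1$, and for $X,Y\in\mathbb F^{n\times n}$ define the $5n\times5n$ block matrices (with $n\times n$ blocks) $$J=\begin{bmatrix}0&I_n&0&0&0\\0&0&I_n&0&0\\0&0&0&I_n&0\\0&0&0&0&0\\0&0&0&0&0\end{bmatrix},\qquad K_{XY}=\begin{bmatrix}0&0&X&0&Y\\0&0&0&X&0\\0&0&0&0&0\\0&0&0&0&0\\0&0&0&I_n&0\end{bmatrix}.$$ Then $J$ and $K_{XY}$ are nilpotent and commute, and for all $X,Y,X',Y'\in\mathbb F^{n\times n}$: the pairs $(X,Y)$ and $(X',Y')$ are similar if and only if the pairs $(J,K_{XY})$ and $(J,K_{X'Y'})$ are similar.
   Context: Two pairs $(M,N)$, $(M',N')$ of square matrices of the same size are similar if $(S^{-1}MS,S^{-1}NS)=(M',N')$ for some nonsingular $S$. *)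

theory Defs
  imports "Jordan_Normal_Form.Matrix"
begin

text \<open>Block matrix with 5x5 blocks of size n x n: block (p,q) is B p q (p,q < 5).\<close>
definition block5 :: "nat \<Rightarrow> (nat \<Rightarrow> nat \<Rightarrow> 'a :: zero mat) \<Rightarrow> 'a mat" where
  "block5 n B = mat (5*n) (5*n) (\<lambda>(i,j). B (i div n) (j div n) $$ (i mod n, j mod n))"

definition Jmat :: "nat \<Rightarrow> 'a :: {zero,one} mat" where
  "Jmat n = block5 n (\<lambda>p q. if (p,q) \<in> {(0,1),(1,2),(2,3)} then 1\<^sub>m n else 0\<^sub>m n n)"

definition Kmat :: "nat \<Rightarrow> 'a :: {zero,one} mat \<Rightarrow> 'a mat \<Rightarrow> 'a mat" where
  "Kmat n X Y = block5 n (\<lambda>p q.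
     if (p,q) = (0,2) then X else
     if (p,q) = (0,4) then Y else
     if (p,q) = (1,3) then X else
     if (p,q) = (4,3) then 1\<^sub>m n else 0\<^sub>m n n)"

definition similar_pair :: "nat \<Rightarrow> 'a :: semiring_1 mat \<Rightarrow> 'a mat \<Rightarrow> 'a mat \<Rightarrow> 'a mat \<Rightarrow> bool" where
  "similar_pair m M N M' N' \<longleftrightarrow> (\<exists>S T. S \<in> carrier_mat m m \<and> T \<in> carrier_mat m m \<and>
      S * T = 1\<^sub>m m \<and> T * S = 1\<^sub>m m \<and> T * M * S = M' \<and> T * N * S = N')"

definition nilpotent_mat :: "'a :: semiring_1 mat \<Rightarrow> bool" where
  "nilpotent_mat A \<longleftrightarrow> (\<exists>k. A ^\<^sub>m k = 0\<^sub>m (dim_row A) (dim_col A))"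

end

theory Submission
  imports Defs
begin

definition blk :: "nat \<Rightarrow> 'a mat \<Rightarrow> nat \<Rightarrow> nat \<Rightarrow> 'a mat" where
  "blk n M p q = mat n n (\<lambda>(i,j). M $$ (p*n+i, q*n+j))"

lemma blk_carrier[simp]: "blk n M p q \<in> carrier_mat n n"
  by (simp add: blk_def)

lemma block5_carrier[simp]: "block5 n B \<in> carrier_mat (5*n) (5*n)"
  by (simp add: block5_def)

lemma block5_dims[simp]: "dim_row (block5 n B) = 5*n" "dim_col (block5 n B) = 5*n"
  by (simp_all add: block5_def)

lemma block5_index: "i < 5*n \<Longrightarrow> j < 5*n \<Longrightarrow>
  block5 n B $$ (i,j) = B (i div n) (j div n) $$ (i mod n, j mod n)"
  by (simp add: block5_def)

lemma idx_lt: "p < 5 \<Longrightarrow> i < n \<Longrightarrow> p*n+i < 5*(n::nat)"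
proof -
  assume a: "p < 5" "i < n"
  have "(p+1)*n \<le> 5*n" by (rule mult_le_mono1) (use a in simp)
  then have "p*n + n \<le> 5*n" by (simp add: algebra_simps)
  then show ?thesis using a by linarith
qed

lemma blk_block5: assumes "p < 5" "q < 5" "B p q \<in> carrier_mat n n"
  shows "blk n (block5 n B) p q = B p q"
proof (rule eq_matI)
  fix i j assume "i < dim_row (B p q)" "j < dim_col (B p q)"
  then have ij: "i < n" "j < n" using assms by auto
  have "p*n+i < 5*n" using ij assms(1)
    by (simp add: idx_lt)
  moreover have "q*n+j < 5*n" using ij assms(2)
    by (simp add: idx_lt)
  ultimately show "blk n (block5 n B) p q $$ (i, j) = B p q $$ (i, j)"
    using ij by (simp add: blk_def block5_index)
qed (use assms in \<open>auto simp: blk_def\<close>)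

lemma block5_blk: assumes "M \<in> carrier_mat (5*n) (5*n)" shows "block5 n (blk n M) = M"
proof (rule eq_matI)
  fix i j assume "i < dim_row M" "j < dim_col M"
  then have ij: "i < 5*n" "j < 5*n" using assms by auto
  then have n: "n > 0" by auto
  have "i div n < 5" "j div n < 5" using ij by (simp_all add: less_mult_imp_div_less)
  then show "block5 n (blk n M) $$ (i, j) = M $$ (i, j)"
    using ij n by (simp add: block5_index blk_def)
qed (use assms in \<open>auto\<close>)

lemma block5_eq: assumes "\<forall>p<5. \<forall>q<5. B p q \<in> carrier_mat n n \<and> C p q \<in> carrier_mat n n"
  shows "(block5 n B = block5 n C) = (\<forall>p<5. \<forall>q<5. B p q = C p q)"
proof
  assume h: "block5 n B = block5 n C"
  show "\<forall>p<5. \<forall>q<5. B p q = C p q"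
  proof (intro allI impI)
    fix p q :: nat assume pq: "p < 5" "q < 5"
    have "B p q = blk n (block5 n B) p q" using blk_block5[of p q B n] pq assms by simp
    also have "\<dots> = blk n (block5 n C) p q" using h by simp
    also have "\<dots> = C p q" using blk_block5[of p q C n] pq assms by simp
    finally show "B p q = C p q" .
  qed
next
  assume h: "\<forall>p<5. \<forall>q<5. B p q = C p q"
  show "block5 n B = block5 n C"
    unfolding block5_def
  proof (rule cong_mat[OF refl refl])
    fix i j assume "i < 5*n" "j < 5*n"
    then have "i div n < 5" "j div n < 5" by (simp_all add: less_mult_imp_div_less)
    then show "(\<lambda>(i,j). B (i div n) (j div n) $$ (i mod n, j mod n)) (i,j) = (\<lambda>(i,j). C (i div n) (j div n) $$ (i mod n, j mod n)) (i,j)"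
      using h by simp
  qed
qed

lemma sum_div_mod: "(\<Sum>k<(m::nat)*n. g (k div n) (k mod n)) = (\<Sum>r<m. \<Sum>l<n. (g r l :: 'a::comm_monoid_add))"
proof (induction m)
  case 0 then show ?case by simp
next
  case (Suc m)
  have "(\<Sum>k<Suc m*n. g (k div n) (k mod n)) = (\<Sum>k<m*n + n. g (k div n) (k mod n))" by (simp add: add.commute)
  also have "\<dots> = (\<Sum>k<m*n. g (k div n) (k mod n)) + (\<Sum>k=m*n..<m*n+n. g (k div n) (k mod n))"
    unfolding lessThan_atLeast0 using sum.atLeastLessThan_concat[of 0 "m*n" "m*n+n" "\<lambda>k. g (k div n) (k mod n)"] by simp
  also have "(\<Sum>k=m*n..<m*n+n. g (k div n) (k mod n)) = (\<Sum>l<n. g m l)"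
  proof -
    have "(\<Sum>k=m*n..<m*n+n. g (k div n) (k mod n)) = (\<Sum>l=0..<n. g ((l+m*n) div n) ((l+m*n) mod n))"
      using sum.shift_bounds_nat_ivl[of "\<lambda>k. g (k div n) (k mod n)" 0 "m*n" n] by (simp add: add.commute)
    also have "\<dots> = (\<Sum>l=0..<n. g m l)" by (rule sum.cong) auto
    finally show ?thesis by (simp add: atLeast0LessThan)
  qed
  finally show ?case using Suc by simp
qed

lemma block5_mult: assumes "\<forall>p<5. \<forall>q<5. B p q \<in> carrier_mat n n \<and> C p q \<in> carrier_mat n n"
  shows "block5 n B * block5 n C = block5 n (\<lambda>p q. B p 0 * C 0 q + B p 1 * C 1 q + B p 2 * C 2 q + B p 3 * C 3 q + B p 4 * (C 4 q :: 'a :: comm_ring_1 mat))"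
proof (rule eq_matI)
  fix i j assume "i < dim_row (block5 n (\<lambda>p q. B p 0 * C 0 q + B p 1 * C 1 q + B p 2 * C 2 q + B p 3 * C 3 q + B p 4 * C 4 q))"
     "j < dim_col (block5 n (\<lambda>p q. B p 0 * C 0 q + B p 1 * C 1 q + B p 2 * C 2 q + B p 3 * C 3 q + B p 4 * C 4 q))"
  then have ij: "i < 5*n" "j < 5*n" by auto
  then have n: "n > 0" by auto
  have pq: "i div n < 5" "j div n < 5" using ij by (simp_all add: less_mult_imp_div_less)
  define p where "p = i div n"
  define q where "q = j div n"
  define a where "a = i mod n"
  define b where "b = j mod n"
  have ab: "a < n" "b < n" using n by (auto simp: a_def b_def)
  have "(block5 n B * block5 n C) $$ (i,j) = (\<Sum>k<5*n. block5 n B $$ (i,k) * block5 n C $$ (k,j))"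
    using ij by (simp add: scalar_prod_def atLeast0LessThan)
  also have "\<dots> = (\<Sum>k<5*n. B p (k div n) $$ (a, k mod n) * C (k div n) q $$ (k mod n, b))"
    by (rule sum.cong) (use ij in \<open>auto simp: block5_index p_def q_def a_def b_def\<close>)
  also have "\<dots> = (\<Sum>r<5. \<Sum>l<n. B p r $$ (a, l) * C r q $$ (l, b))"
    by (rule sum_div_mod)
  also have "\<dots> = (B p 0 * C 0 q + B p 1 * C 1 q + B p 2 * C 2 q + B p 3 * C 3 q + B p 4 * C 4 q) $$ (a,b)"
  proof -
    have c: "\<And>r. r < 5 \<Longrightarrow> B p r \<in> carrier_mat n n \<and> C r q \<in> carrier_mat n n"
      using assms pq unfolding p_def q_def by blast
    have m: "(B p r * C r q) $$ (a,b) = (\<Sum>l<n. B p r $$ (a, l) * C r q $$ (l, b))" if r: "r < 5" for r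
    proof -
      have "B p r \<in> carrier_mat n n" "C r q \<in> carrier_mat n n" using c[OF r] by auto
      then show ?thesis using ab by (simp add: scalar_prod_def atLeast0LessThan)
    qed
    have "(\<Sum>r<5. \<Sum>l<n. B p r $$ (a, l) * C r q $$ (l, b)) = (\<Sum>r<5. (B p r * C r q) $$ (a,b))"
      using m by simp
    also have "\<dots> = (B p 0 * C 0 q) $$ (a,b) + (B p 1 * C 1 q) $$ (a,b) + (B p 2 * C 2 q) $$ (a,b) + (B p 3 * C 3 q) $$ (a,b) + (B p 4 * C 4 q) $$ (a,b)"
      by (simp add: numeral_eq_Suc add.assoc)
    also have "\<dots> = (B p 0 * C 0 q + B p 1 * C 1 q + B p 2 * C 2 q + B p 3 * C 3 q + B p 4 * C 4 q) $$ (a,b)"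
    proof -
      have d: "dim_row (B p r) = n \<and> dim_col (C r q) = n" if "r < 5" for r using c[OF that] by auto
      show ?thesis using d[of 0] d[of 1] d[of 2] d[of 3] d[of 4] ab by simp
    qed
    finally show ?thesis .
  qed
  finally show "(block5 n B * block5 n C) $$ (i,j) = block5 n (\<lambda>p q. B p 0 * C 0 q + B p 1 * C 1 q + B p 2 * C 2 q + B p 3 * C 3 q + B p 4 * C 4 q) $$ (i,j)"
    using ij by (simp add: block5_index p_def q_def a_def b_def)
qed auto


lemma block5_cong: assumes "\<forall>p<5. \<forall>q<5. B p q = C p q" shows "block5 n B = block5 n C"
  unfolding block5_def
proof (rule cong_mat[OF refl refl])
  fix i j assume "i < 5*n" "j < 5*n"
  then have "i div n < 5" "j div n < 5" by (simp_all add: less_mult_imp_div_less)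
  then show "(\<lambda>(i,j). B (i div n) (j div n) $$ (i mod n, j mod n)) (i,j) = (\<lambda>(i,j). C (i div n) (j div n) $$ (i mod n, j mod n)) (i,j)"
    using assms by simp
qed

lemma block5_mult_eq:
  assumes "\<And>p q. B p q \<in> carrier_mat n n" "\<And>p q. C p q \<in> carrier_mat n n"
   "\<forall>p<5. \<forall>q<5. B p 0 * C 0 q + B p 1 * C 1 q + B p 2 * C 2 q + B p 3 * C 3 q + B p 4 * C 4 q = D p q"
  shows "block5 n B * block5 n C = block5 n (D :: nat \<Rightarrow> nat \<Rightarrow> 'a :: comm_ring_1 mat)"
  using block5_mult[of B n C] assms block5_cong[OF assms(3)] by auto

lemma block5_mult_ext:
  assumes "\<And>p q. B p q \<in> carrier_mat n n" "\<And>p q. C p q \<in> carrier_mat n n"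
   "\<And>p q. G p q \<in> carrier_mat n n" "\<And>p q. H p q \<in> carrier_mat n n"
   "block5 n B * block5 n C = block5 n G * block5 n (H :: nat \<Rightarrow> nat \<Rightarrow> 'a :: comm_ring_1 mat)"
  shows "\<forall>p<5. \<forall>q<5. B p 0 * C 0 q + B p 1 * C 1 q + B p 2 * C 2 q + B p 3 * C 3 q + B p 4 * C 4 q
     = G p 0 * H 0 q + G p 1 * H 1 q + G p 2 * H 2 q + G p 3 * H 3 q + G p 4 * H 4 q"
proof -
  have "block5 n (\<lambda>p q. B p 0 * C 0 q + B p 1 * C 1 q + B p 2 * C 2 q + B p 3 * C 3 q + B p 4 * C 4 q)
     = block5 n (\<lambda>p q. G p 0 * H 0 q + G p 1 * H 1 q + G p 2 * H 2 q + G p 3 * H 3 q + G p 4 * H 4 q)"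
    using assms block5_mult[of B n C] block5_mult[of G n H] by auto
  then show ?thesis
    by (subst (asm) block5_eq) (use assms in \<open>auto intro!: add_carrier_mat mult_carrier_mat\<close>)
qed

lemma all5: "(\<forall>p<(5::nat). P p) = (P 0 \<and> P 1 \<and> P 2 \<and> P 3 \<and> P 4)"
  by (auto simp: eval_nat_numeral less_Suc_eq)

lemma one_block5: "1\<^sub>m (5*n) = block5 n (\<lambda>p q. if p = q then 1\<^sub>m n else (0\<^sub>m n n :: 'a :: {zero,one} mat))"
proof (rule eq_matI)
  fix i j assume "i < dim_row (block5 n (\<lambda>p q. if p = q then 1\<^sub>m n else (0\<^sub>m n n :: 'a mat)))"
    "j < dim_col (block5 n (\<lambda>p q. if p = q then 1\<^sub>m n else (0\<^sub>m n n :: 'a mat)))"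
  then have ij: "i < 5*n" "j < 5*n" by auto
  then have n: "n > 0" by auto
  have e: "(i = j) = (i div n = j div n \<and> i mod n = j mod n)" by (metis div_mult_mod_eq)
  show "1\<^sub>m (5*n) $$ (i,j) = block5 n (\<lambda>p q. if p = q then 1\<^sub>m n else (0\<^sub>m n n :: 'a mat)) $$ (i,j)"
    using ij n e by (simp add: block5_index)
qed auto

lemma zero_block5: "0\<^sub>m (5*n) (5*n) = block5 n (\<lambda>p q. (0\<^sub>m n n :: 'a :: zero mat))"
  by (rule eq_matI) (auto simp: block5_index)

definition jb :: "nat \<Rightarrow> nat \<Rightarrow> nat \<Rightarrow> 'a :: {zero,one} mat" where
  "jb n p q = (if (p,q) \<in> {(0,1),(1,2),(2,3)} then 1\<^sub>m n else 0\<^sub>m n n)"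

definition kb :: "nat \<Rightarrow> 'a :: {zero,one} mat \<Rightarrow> 'a mat \<Rightarrow> nat \<Rightarrow> nat \<Rightarrow> 'a mat" where
  "kb n X Y p q = (if (p,q) = (0,2) then X else
     if (p,q) = (0,4) then Y else
     if (p,q) = (1,3) then X else
     if (p,q) = (4,3) then 1\<^sub>m n else 0\<^sub>m n n)"

lemma Jmat_block: "Jmat n = block5 n (jb n)" unfolding Jmat_def jb_def ..
lemma Kmat_block: "Kmat n X Y = block5 n (kb n X Y)" unfolding Kmat_def kb_def ..

lemma jb_carrier[simp]: "jb n p q \<in> carrier_mat n n" by (simp add: jb_def)
lemma kb_carrier: "X \<in> carrier_mat n n \<Longrightarrow> Y \<in> carrier_mat n n \<Longrightarrow> kb n X Y p q \<in> carrier_mat n n"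
  by (simp add: kb_def)

context fixes n :: nat and X Y :: "'a :: field mat"
  assumes X: "X \<in> carrier_mat n n" and Y: "Y \<in> carrier_mat n n"
begin

lemma XYd[simp]: "dim_row X = n" "dim_col X = n" "dim_row Y = n" "dim_col Y = n"
  using X Y by auto

lemma kbc[simp]: "kb n X Y p q \<in> carrier_mat n n" using kb_carrier[OF X Y] .

lemma J2: "block5 n (jb n) * block5 n (jb n) = block5 n (\<lambda>p q. if (p,q) \<in> {(0,2),(1,3)} then 1\<^sub>m n else (0\<^sub>m n n :: 'a mat))"
  by (rule block5_mult_eq) (auto simp: all5 jb_def)


lemma J3: "block5 n (\<lambda>p q. if (p,q) \<in> {(0,2),(1,3)} then 1\<^sub>m n else (0\<^sub>m n n :: 'a mat)) * block5 n (jb n)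
   = block5 n (\<lambda>p q. if (p,q) = (0,3) then 1\<^sub>m n else (0\<^sub>m n n :: 'a mat))"
  by (rule block5_mult_eq) (auto simp: all5 jb_def)

lemma J4: "block5 n (\<lambda>p q. if (p,q) = (0,3) then 1\<^sub>m n else (0\<^sub>m n n :: 'a mat)) * block5 n (jb n)
   = block5 n (\<lambda>p q. 0\<^sub>m n n)"
  by (rule block5_mult_eq) (auto simp: all5 jb_def)

lemma K2: "block5 n (kb n X Y) * block5 n (kb n X Y) = block5 n (\<lambda>p q. if (p,q) = (0,3) then Y else 0\<^sub>m n n)"
  by (rule block5_mult_eq) (auto simp: all5 kb_def)

lemma K3: "block5 n (\<lambda>p q. if (p,q) = (0,3) then Y else 0\<^sub>m n n) * block5 n (kb n X Y) = block5 n (\<lambda>p q. 0\<^sub>m n n)"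
  by (rule block5_mult_eq) (auto simp: all5 kb_def)

lemma JK: "block5 n (jb n) * block5 n (kb n X Y) = block5 n (\<lambda>p q. if (p,q) = (0,3) then X else 0\<^sub>m n n)"
  by (rule block5_mult_eq) (auto simp: all5 kb_def jb_def)

lemma KJ: "block5 n (kb n X Y) * block5 n (jb n) = block5 n (\<lambda>p q. if (p,q) = (0,3) then X else 0\<^sub>m n n)"
  by (rule block5_mult_eq) (auto simp: all5 kb_def jb_def)

lemma part1: "nilpotent_mat (Jmat n :: 'a mat) \<and> nilpotent_mat (Kmat n X Y) \<and>
            Jmat n * Kmat n X Y = Kmat n X Y * Jmat n"
proof (intro conjI)
  have "(Jmat n :: 'a mat) ^\<^sub>m 4 = ((Jmat n * Jmat n) * Jmat n) * Jmat n"
    by (simp add: numeral_eq_Suc Jmat_block)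
  also have "\<dots> = 0\<^sub>m (5*n) (5*n)" unfolding Jmat_block J2 J3 J4 zero_block5 ..
  finally show "nilpotent_mat (Jmat n :: 'a mat)" unfolding nilpotent_mat_def
    by (intro exI[of _ 4]) (simp add: Jmat_block)
  have "Kmat n X Y ^\<^sub>m 3 = (Kmat n X Y * Kmat n X Y) * Kmat n X Y"
    by (simp add: numeral_eq_Suc Kmat_block)
  also have "\<dots> = 0\<^sub>m (5*n) (5*n)" unfolding Kmat_block K2 K3 zero_block5 ..
  finally show "nilpotent_mat (Kmat n X Y)" unfolding nilpotent_mat_def
    by (intro exI[of _ 3]) (simp add: Kmat_block)
  show "Jmat n * Kmat n X Y = Kmat n X Y * Jmat n" unfolding Jmat_block Kmat_block JK KJ ..
qed

end

lemma diag_left: assumes "A \<in> carrier_mat n n" "\<And>p q. B p q \<in> carrier_mat n n"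
  shows "block5 n (\<lambda>p q. if p = q then A else 0\<^sub>m n n) * block5 n B = block5 n (\<lambda>p q. A * (B p q :: 'a :: comm_ring_1 mat))"
proof (rule block5_mult_eq)
  have d: "dim_row (B p q) = n" "dim_col (B p q) = n" for p q using assms(2)[of p q] by auto
  show "\<forall>p<5. \<forall>q<5. (if p = 0 then A else 0\<^sub>m n n) * B 0 q + (if p = 1 then A else 0\<^sub>m n n) * B 1 q +
        (if p = 2 then A else 0\<^sub>m n n) * B 2 q + (if p = 3 then A else 0\<^sub>m n n) * B 3 q + (if p = 4 then A else 0\<^sub>m n n) * B 4 q =
        A * B p q"
    using assms by (auto simp: all5 d)
qed (use assms in auto)

lemma diag_right: assumes "A \<in> carrier_mat n n" "\<And>p q. B p q \<in> carrier_mat n n"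
  shows "block5 n B * block5 n (\<lambda>p q. if p = q then A else 0\<^sub>m n n) = block5 n (\<lambda>p q. (B p q :: 'a :: comm_ring_1 mat) * A)"
proof (rule block5_mult_eq)
  have d: "dim_row (B p q) = n" "dim_col (B p q) = n" for p q using assms(2)[of p q] by auto
  show "\<forall>p<5. \<forall>q<5. B p 0 * (if 0 = q then A else 0\<^sub>m n n) + B p 1 * (if 1 = q then A else 0\<^sub>m n n) +
        B p 2 * (if 2 = q then A else 0\<^sub>m n n) + B p 3 * (if 3 = q then A else 0\<^sub>m n n) + B p 4 * (if 4 = q then A else 0\<^sub>m n n) =
        B p q * A"
    using assms by (auto simp: all5 d)
qed (use assms in auto)


lemma fwd:
  fixes X Y X' Y' :: "'a :: field mat"
  assumes c: "X \<in> carrier_mat n n" "Y \<in> carrier_mat n n" "X' \<in> carrier_mat n n" "Y' \<in> carrier_mat n n"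
    and sim: "similar_pair n X Y X' Y'"
  shows "similar_pair (5*n) (Jmat n) (Kmat n X Y) (Jmat n) (Kmat n X' Y')"
proof -
  obtain S0 T0 where S0: "S0 \<in> carrier_mat n n" and T0: "T0 \<in> carrier_mat n n"
    and ST: "S0 * T0 = 1\<^sub>m n" and TS: "T0 * S0 = 1\<^sub>m n" and hX: "T0 * X * S0 = X'" and hY: "T0 * Y * S0 = Y'"
    using sim unfolding similar_pair_def by blast
  define S where "S = block5 n (\<lambda>p q. if p = q then S0 else 0\<^sub>m n n)"
  define T where "T = block5 n (\<lambda>p q. if p = q then T0 else 0\<^sub>m n n)"
  have gen: "T * block5 n B * S = block5 n (\<lambda>p q. T0 * B p q * S0)" if B: "\<And>p q. B p q \<in> carrier_mat n n" for B
  proof -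
    have "T * block5 n B = block5 n (\<lambda>p q. T0 * B p q)" unfolding T_def by (rule diag_left[OF T0 B])
    also have "\<dots> * S = block5 n (\<lambda>p q. T0 * B p q * S0)" unfolding S_def
      by (rule diag_right[OF S0]) (use T0 B in auto)
    finally show ?thesis .
  qed
  have "S * T = block5 n (\<lambda>p q. S0 * (if p = q then T0 else 0\<^sub>m n n))"
    unfolding S_def T_def by (rule diag_left[OF S0]) (use T0 in auto)
  also have "\<dots> = 1\<^sub>m (5*n)" unfolding one_block5 by (rule block5_cong) (use ST S0 in auto)
  finally have 1: "S * T = 1\<^sub>m (5*n)" .
  have "T * S = block5 n (\<lambda>p q. T0 * (if p = q then S0 else 0\<^sub>m n n))"
    unfolding S_def T_def by (rule diag_left[OF T0]) (use S0 in auto)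
  also have "\<dots> = 1\<^sub>m (5*n)" unfolding one_block5 by (rule block5_cong) (use TS T0 in auto)
  finally have 2: "T * S = 1\<^sub>m (5*n)" .
  have "T * Jmat n * S = block5 n (\<lambda>p q. T0 * jb n p q * S0)" unfolding Jmat_block by (rule gen) simp
  also have "\<dots> = Jmat n" unfolding Jmat_block by (rule block5_cong) (use TS T0 S0 in \<open>auto simp: jb_def\<close>)
  finally have 3: "T * Jmat n * S = Jmat n" .
  have "T * Kmat n X Y * S = block5 n (\<lambda>p q. T0 * kb n X Y p q * S0)" unfolding Kmat_block
    by (rule gen) (use kb_carrier[OF c(1,2)] in auto)
  also have "\<dots> = Kmat n X' Y'" unfolding Kmat_block by (rule block5_cong) (use TS T0 S0 hX hY in \<open>auto simp: kb_def\<close>)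
  finally have 4: "T * Kmat n X Y * S = Kmat n X' Y'" .
  show ?thesis unfolding similar_pair_def
    by (rule exI[of _ S], rule exI[of _ T]) (use 1 2 3 4 in \<open>auto simp: S_def T_def\<close>)
qed


lemma assoc_aux: assumes A: "A \<in> carrier_mat m m" and B: "B \<in> carrier_mat m m"
  and C: "C \<in> carrier_mat m m" and D: "D \<in> carrier_mat m m"
  shows "A * (B * C * D) = A * B * C * (D :: 'a :: semiring_0 mat)"
proof -
  have e1: "B*C*D = B*(C*D)" using assoc_mult_mat[OF B C D] .
  have e2: "A*(B*(C*D)) = A*B*(C*D)" using assoc_mult_mat[OF A B mult_carrier_mat[OF C D]] by simp
  have e3: "A*B*(C*D) = A*B*C*D" using assoc_mult_mat[OF mult_carrier_mat[OF A B] C D] by simp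
  show ?thesis using e1 e2 e3 by simp
qed

lemma bwd:
  fixes X Y X' Y' :: "'a :: field mat"
  assumes c: "X \<in> carrier_mat n n" "Y \<in> carrier_mat n n" "X' \<in> carrier_mat n n" "Y' \<in> carrier_mat n n"
    and sim: "similar_pair (5*n) (Jmat n) (Kmat n X Y) (Jmat n) (Kmat n X' Y')"
  shows "similar_pair n X Y X' Y'"
proof -
  obtain S T where S: "S \<in> carrier_mat (5*n) (5*n)" and T: "T \<in> carrier_mat (5*n) (5*n)"
    and ST: "S * T = 1\<^sub>m (5*n)" and TS: "T * S = 1\<^sub>m (5*n)" and hJ: "T * Jmat n * S = Jmat n"
    and hK: "T * Kmat n X Y * S = Kmat n X' Y'"
    using sim unfolding similar_pair_def by blast
  have Jc: "Jmat n \<in> carrier_mat (5*n) (5*n)" "Kmat n X Y \<in> carrier_mat (5*n) (5*n)"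
    "Kmat n X' Y' \<in> carrier_mat (5*n) (5*n)"
    by (simp_all add: Jmat_block Kmat_block)
  have Jd: "dim_row (Jmat n) = 5*n" "dim_col (Jmat n) = 5*n" "dim_row (Kmat n X Y) = 5*n"
    by (simp_all add: Jmat_block Kmat_block)
  have JS: "Jmat n * S = S * Jmat n"
  proof -
    have "S * Jmat n = S * (T * Jmat n * S)" using hJ by simp
    also have "\<dots> = (S * T) * Jmat n * S" using assoc_aux[OF S T Jc(1) S] .
    also have "\<dots> = Jmat n * S" by (simp only: ST left_mult_one_mat[OF Jc(1)])
    finally show ?thesis by simp
  qed
  have KS: "Kmat n X Y * S = S * Kmat n X' Y'"
  proof -
    have "S * Kmat n X' Y' = S * (T * Kmat n X Y * S)" using hK by simp
    also have "\<dots> = (S * T) * Kmat n X Y * S" using assoc_aux[OF S T Jc(2) S] .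
    also have "\<dots> = Kmat n X Y * S" by (simp only: ST left_mult_one_mat[OF Jc(2)])
    finally show ?thesis by simp
  qed
  have JT: "Jmat n * T = T * Jmat n"
  proof -
    have "Jmat n * T = (T * Jmat n * S) * T" using hJ by simp
    also have "\<dots> = T * Jmat n * (S * T)" using assoc_mult_mat[OF mult_carrier_mat[OF T Jc(1)] S T] .
    also have "\<dots> = T * Jmat n" by (simp only: ST right_mult_one_mat[OF mult_carrier_mat[OF T Jc(1)]])
    finally show ?thesis by simp
  qed
  define s where "s = blk n S"
  define t where "t = blk n T"
  have sc[simp]: "s p q \<in> carrier_mat n n" "dim_row (s p q) = n" "dim_col (s p q) = n"
    "t p q \<in> carrier_mat n n" "dim_row (t p q) = n" "dim_col (t p q) = n" for p q
    by (auto simp: s_def t_def blk_def)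
  have Sb: "S = block5 n s" using block5_blk[OF S] s_def by simp
  have Tb: "T = block5 n t" using block5_blk[OF T] t_def by simp
  have kc: "kb n X Y p q \<in> carrier_mat n n" "kb n X' Y' p q \<in> carrier_mat n n" for p q
    using kb_carrier c by auto
  have cd: "dim_row X = n" "dim_col X = n" "dim_row Y = n" "dim_col Y = n"
     "dim_row X' = n" "dim_col X' = n" "dim_row Y' = n" "dim_col Y' = n" using c by auto
  have eJS: "\<forall>p<5. \<forall>q<5. jb n p 0 * s 0 q + jb n p 1 * s 1 q + jb n p 2 * s 2 q + jb n p 3 * s 3 q + jb n p 4 * s 4 q
     = s p 0 * jb n 0 q + s p 1 * jb n 1 q + s p 2 * jb n 2 q + s p 3 * jb n 3 q + s p 4 * jb n 4 q"
    by (rule block5_mult_ext[where n=n]) (use JS in \<open>auto simp: Sb Jmat_block\<close>)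
  have eJT: "\<forall>p<5. \<forall>q<5. jb n p 0 * t 0 q + jb n p 1 * t 1 q + jb n p 2 * t 2 q + jb n p 3 * t 3 q + jb n p 4 * t 4 q
     = t p 0 * jb n 0 q + t p 1 * jb n 1 q + t p 2 * jb n 2 q + t p 3 * jb n 3 q + t p 4 * jb n 4 q"
    by (rule block5_mult_ext[where n=n]) (use JT in \<open>auto simp: Tb Jmat_block\<close>)
  have eKS: "\<forall>p<5. \<forall>q<5. kb n X Y p 0 * s 0 q + kb n X Y p 1 * s 1 q + kb n X Y p 2 * s 2 q + kb n X Y p 3 * s 3 q + kb n X Y p 4 * s 4 q
     = s p 0 * kb n X' Y' 0 q + s p 1 * kb n X' Y' 1 q + s p 2 * kb n X' Y' 2 q + s p 3 * kb n X' Y' 3 q + s p 4 * kb n X' Y' 4 q"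
    by (rule block5_mult_ext[where n=n]) (use KS kc in \<open>auto simp: Sb Kmat_block\<close>)
  have eST: "\<forall>p<5. \<forall>q<5. s p 0 * t 0 q + s p 1 * t 1 q + s p 2 * t 2 q + s p 3 * t 3 q + s p 4 * t 4 q
     = (if p = q then 1\<^sub>m n else 0\<^sub>m n n)"
  proof -
    have "block5 n s * block5 n t = block5 n (\<lambda>p q. if p = q then 1\<^sub>m n else 0\<^sub>m n n)"
      using ST[unfolded Sb Tb one_block5] .
    then have "block5 n (\<lambda>p q. s p 0 * t 0 q + s p 1 * t 1 q + s p 2 * t 2 q + s p 3 * t 3 q + s p 4 * t 4 q)
       = block5 n (\<lambda>p q. if p = q then 1\<^sub>m n else 0\<^sub>m n n)"
      using block5_mult[of s n t] by simp
    then show ?thesis by (subst (asm) block5_eq) (auto intro!: add_carrier_mat mult_carrier_mat)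
  qed
  have eTS: "\<forall>p<5. \<forall>q<5. t p 0 * s 0 q + t p 1 * s 1 q + t p 2 * s 2 q + t p 3 * s 3 q + t p 4 * s 4 q
     = (if p = q then 1\<^sub>m n else 0\<^sub>m n n)"
  proof -
    have "block5 n t * block5 n s = block5 n (\<lambda>p q. if p = q then 1\<^sub>m n else 0\<^sub>m n n)"
      using TS[unfolded Sb Tb one_block5] .
    then have "block5 n (\<lambda>p q. t p 0 * s 0 q + t p 1 * s 1 q + t p 2 * s 2 q + t p 3 * s 3 q + t p 4 * s 4 q)
       = block5 n (\<lambda>p q. if p = q then 1\<^sub>m n else 0\<^sub>m n n)"
      using block5_mult[of t n s] by simp
    then show ?thesis by (subst (asm) block5_eq) (auto intro!: add_carrier_mat mult_carrier_mat)
  qed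
  have s10: "s 1 0 = 0\<^sub>m n n" using eJS[rule_format, of 0 0] by (simp add: jb_def)
  have s20: "s 2 0 = 0\<^sub>m n n" using eJS[rule_format, of 1 0] by (simp add: jb_def)
  have s30: "s 3 0 = 0\<^sub>m n n" using eJS[rule_format, of 2 0] by (simp add: jb_def)
  have s40: "s 4 0 = 0\<^sub>m n n" using eJS[rule_format, of 4 1] by (simp add: jb_def)
  have t10: "t 1 0 = 0\<^sub>m n n" using eJT[rule_format, of 0 0] by (simp add: jb_def)
  have t20: "t 2 0 = 0\<^sub>m n n" using eJT[rule_format, of 1 0] by (simp add: jb_def)
  have t30: "t 3 0 = 0\<^sub>m n n" using eJT[rule_format, of 2 0] by (simp add: jb_def)
  have t40: "t 4 0 = 0\<^sub>m n n" using eJT[rule_format, of 4 1] by (simp add: jb_def)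
  have s11: "s 1 1 = s 0 0" using eJS[rule_format, of 0 1] by (simp add: jb_def)
  have s22: "s 2 2 = s 1 1" using eJS[rule_format, of 1 2] by (simp add: jb_def)
  have s33: "s 3 3 = s 2 2" using eJS[rule_format, of 2 3] by (simp add: jb_def)
  have s42: "s 4 2 = 0\<^sub>m n n" using eJS[rule_format, of 4 3] by (simp add: jb_def)
  have s41: "s 4 1 = 0\<^sub>m n n" using eJS[rule_format, of 4 2] by (simp add: jb_def)
  have s24: "s 2 4 = 0\<^sub>m n n" using eJS[rule_format, of 1 4] by (simp add: jb_def)
  have s44: "s 4 4 = s 3 3" using eKS[rule_format, of 4 3] s41 by (simp add: kb_def cd)
  have pc: "X * s 0 0 \<in> carrier_mat n n" "s 0 0 * X' \<in> carrier_mat n n"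
    "Y * s 0 0 \<in> carrier_mat n n" "s 0 0 * Y' \<in> carrier_mat n n"
    using mult_carrier_mat[OF c(1) sc(1)] mult_carrier_mat[OF sc(1) c(3)]
      mult_carrier_mat[OF c(2) sc(1)] mult_carrier_mat[OF sc(1) c(4)] by auto
  have hX0: "0\<^sub>m n n + X * s 0 0 + 0\<^sub>m n n = s 0 0 * X' + 0\<^sub>m n n"
    using eKS[rule_format, of 0 2] s22 s11 s42 s10 s20 s30 s40 by (simp add: kb_def cd)
  have hX: "X * s 0 0 = s 0 0 * X'" using hX0
    by (simp only: left_add_zero_mat[OF pc(1)] right_add_zero_mat[OF pc(1)] right_add_zero_mat[OF pc(2)])
  have hY0: "0\<^sub>m n n + Y * s 0 0 = s 0 0 * Y' + 0\<^sub>m n n"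
    using eKS[rule_format, of 0 4] s24 s44 s33 s22 s11 s10 s20 s30 s40 by (simp add: kb_def cd)
  have hY: "Y * s 0 0 = s 0 0 * Y'" using hY0
    by (simp only: left_add_zero_mat[OF pc(3)] right_add_zero_mat[OF pc(4)])
  have st0: "s 0 0 * t 0 0 + 0\<^sub>m n n = 1\<^sub>m n" using eST[rule_format, of 0 0] t10 t20 t30 t40 by simp
  have st: "s 0 0 * t 0 0 = 1\<^sub>m n" using st0
    by (simp only: right_add_zero_mat[OF mult_carrier_mat[OF sc(1) sc(4)]])
  have ts0: "t 0 0 * s 0 0 + 0\<^sub>m n n = 1\<^sub>m n" using eTS[rule_format, of 0 0] s10 s20 s30 s40 by simp
  have ts: "t 0 0 * s 0 0 = 1\<^sub>m n" using ts0
    by (simp only: right_add_zero_mat[OF mult_carrier_mat[OF sc(4) sc(1)]])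
  have fX: "t 0 0 * X * s 0 0 = X'"
  proof -
    have "t 0 0 * X * s 0 0 = t 0 0 * (X * s 0 0)" using assoc_mult_mat[OF sc(4) c(1) sc(1)] .
    also have "\<dots> = (t 0 0 * s 0 0) * X'" using hX assoc_mult_mat[OF sc(4) sc(1) c(3)] by simp
    finally show ?thesis using ts c by simp
  qed
  have fY: "t 0 0 * Y * s 0 0 = Y'"
  proof -
    have "t 0 0 * Y * s 0 0 = t 0 0 * (Y * s 0 0)" using assoc_mult_mat[OF sc(4) c(2) sc(1)] .
    also have "\<dots> = (t 0 0 * s 0 0) * Y'" using hY assoc_mult_mat[OF sc(4) sc(1) c(4)] by simp
    finally show ?thesis using ts c by simp
  qed
  show ?thesis unfolding similar_pair_def
    by (rule exI[of _ "s 0 0"], rule exI[of _ "t 0 0"]) (use st ts fX fY in simp)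
qed


theorem mainTheorem3:
  fixes n :: nat
  assumes "n \<ge> 1"
  shows "(\<forall>X Y :: 'a :: field mat. X \<in> carrier_mat n n \<longrightarrow> Y \<in> carrier_mat n n \<longrightarrow>
            nilpotent_mat (Jmat n :: 'a mat) \<and> nilpotent_mat (Kmat n X Y) \<and>
            Jmat n * Kmat n X Y = Kmat n X Y * Jmat n) \<and>
         (\<forall>X Y X' Y' :: 'a mat. X \<in> carrier_mat n n \<longrightarrow> Y \<in> carrier_mat n n \<longrightarrow>
            X' \<in> carrier_mat n n \<longrightarrow> Y' \<in> carrier_mat n n \<longrightarrow>
            (similar_pair n X Y X' Y' \<longleftrightarrow>
             similar_pair (5*n) (Jmat n) (Kmat n X Y) (Jmat n) (Kmat n X' Y')))"
proof (rule conjI; intro allI impI)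
  fix X Y :: "'a mat" assume "X \<in> carrier_mat n n" "Y \<in> carrier_mat n n"
  then show "nilpotent_mat (Jmat n :: 'a mat) \<and> nilpotent_mat (Kmat n X Y) \<and>
            Jmat n * Kmat n X Y = Kmat n X Y * Jmat n" by (rule part1)
next
  fix X Y X' Y' :: "'a mat"
  assume c: "X \<in> carrier_mat n n" "Y \<in> carrier_mat n n" "X' \<in> carrier_mat n n" "Y' \<in> carrier_mat n n"
  show "similar_pair n X Y X' Y' \<longleftrightarrow> similar_pair (5*n) (Jmat n) (Kmat n X Y) (Jmat n) (Kmat n X' Y')"
    using fwd[OF c] bwd[OF c] by blast
qed

end
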